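(* Let $\mathcal H$ be a Hilbert space (real or complex), let $X$ be a measure space and let $1<q<\infty$, $q'=q/(q-1)$. Let $A:\mathcal H\to L^q(X)$ be a bounded linear operator, let $A^*: L^{q'}(X)\to\mathcal H$ be its adjoint and let $\alpha:= \|A\|=\|A^*\|$. Then: (a1) If $f\in\mathcal H$ satisfies $\|f\|_{\mathcal H}=1$ and $\|Af\|_q=\alpha$, then $g:=\|Af\|_q^{1-q} |Af|^{q-2}Af$ satisfies $\|g\|_{q'}=1$ and $\|A^* g\|_{\mathcal H}= \alpha$. (a2) If $(f_n)\subset\mathcal H$ satisfies $\|f_n\|_{\mathcal H}=1$ and $\|Af_n\|_q\to\alpha$, then $g_n:=\|Af_n\|_q^{1-q} |Af_n|^{q-2}Af_n$ satisfies $\|g_n\|_{q'}=1$ and $\|A^* g_n\|_{\mathcal H}\to \alpha$. If, in addition, $g_n\to g$ in $L^{q'}(X)$, then $f_n\to \|A^* g\|_{\mathcal H}^{-1} A^* g$ in $\mathcal H$. (b1) If $g\in L^{q'}(X)$ satisfies $\|g\|_{q'}=1$ and $\|A^*g\|_{\mathcal H} = \alpha$, then $f := \|A^* g\|_{\mathcal H}^{-1} A^* g$ satisfies $\|f\|_{\mathcal H}=1$ and $\|A f\|_q= \alpha$. (b2) If $(g_n)\subset L^{q'}(X)$ satisfies $\|g_n\|_{q'}=1$ and $\|A^*g_n\|_{\mathcal H} \to \alpha$, then $f_n := \|A^* g_n\|_{\mathcal H}^{-1} A^* g_n$ satisfies $\|f_n\|_{\mathcal H}=1$ and $\|A f_n\|_q\to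 \alpha$. If, in addition, $f_n\to f$ in $\mathcal H$, then $g_n\to \|Af\|_q^{1-q}|Af|^{q-2} Af$ in $L^{q'}(X)$.
   Context: $\|\cdot\|_p$ denotes the norm of $L^p(X)$. In the complex case $|Af|^{q-2}Af$ is understood pointwise with the complex value $Af$. *)

theory Defs
  imports "HOL-Analysis.Analysis"
begin

text \<open>The scalar type is real or complex (any real_inner normed field).\<close>

definition Lq_space :: "'a measure \<Rightarrow> real \<Rightarrow> ('a \<Rightarrow> 'k::{real_inner,real_normed_field}) set" where
  "Lq_space M q = {u. u \<in> borel_measurable M \<and> integrable M (\<lambda>x. norm (u x) powr q)}"

definition Lq_norm :: "'a measure \<Rightarrow> real \<Rightarrow> ('a \<Rightarrow> 'k::{real_inner,real_normed_field}) \<Rightarrow> real" where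
  "Lq_norm M q u = (\<integral>x. norm (u x) powr q \<partial>M) powr (1 / q)"

definition duality_map :: "'a measure \<Rightarrow> real \<Rightarrow> ('a \<Rightarrow> 'k::{real_inner,real_normed_field}) \<Rightarrow> 'a \<Rightarrow> 'k" where
  "duality_map M q u = (\<lambda>x. Lq_norm M q u powr (1 - q) *\<^sub>R (norm (u x) powr (q - 2) *\<^sub>R u x))"

definition op_norm_Lq :: "'a measure \<Rightarrow> real \<Rightarrow> ('h::real_normed_vector \<Rightarrow> 'a \<Rightarrow> 'k::{real_inner,real_normed_field}) \<Rightarrow> real" where
  "op_norm_Lq M q A = (SUP f\<in>{f. norm f \<le> 1}. Lq_norm M q (A f))"

end

theory Submission
  imports Defs
begin


lemma k_inner_mult:
  fixes a b :: "'k::{real_inner,real_normed_field}"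
  shows "inner (a*b) (a*b) = inner a a * inner b b"
  by (metis norm_mult power2_norm_eq_inner power_mult_distrib)

lemma k_sq_orth:
  fixes x :: "'k::{real_inner,real_normed_field}"
  assumes "inner x 1 = 0"
  shows "x * x = - of_real (inner x x)"
proof -
  have o: "inner (1::'k) 1 = 1" by (metis norm_one power2_norm_eq_inner one_power2)
  have e1: "(x+1)*(x-1) = x*x - 1" by (simp add: algebra_simps)
  have "inner ((x+1)*(x-1)) ((x+1)*(x-1)) = inner (x+1) (x+1) * inner (x-1) (x-1)"
    by (rule k_inner_mult)
  also have "inner (x+1) (x+1) = inner x x + 1" using assms o
    by (simp add: inner_add_left inner_add_right inner_commute)
  also have "inner (x-1) (x-1) = inner x x + 1" using assms o
    by (simp add: inner_diff_left inner_diff_right inner_commute)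
  finally have "inner (x*x - 1) (x*x - 1) = (inner x x + 1)^2" unfolding e1 by (simp add: power2_eq_square)
  moreover have "inner (x*x - 1) (x*x - 1) = inner x x ^2 - 2 * inner (x*x) 1 + 1"
    using o k_inner_mult[of x x]
    by (simp add: inner_diff_left inner_diff_right inner_commute power2_eq_square)
  ultimately have xx1: "inner (x*x) 1 = - inner x x" by (simp add: power2_eq_square algebra_simps)
  have "inner (x*x + of_real (inner x x)) (x*x + of_real (inner x x)) = 0"
    using o xx1 k_inner_mult[of x x]
    by (simp add: of_real_def inner_add_left inner_add_right inner_commute power2_eq_square algebra_simps)
  then have "x*x + of_real (inner x x) = 0" by simp
  then show ?thesis by (simp add: eq_neg_iff_add_eq_0)
qed

lemma k_decomp:
  "\<exists>e::'k::{real_inner,real_normed_field}. \<forall>v. v = inner v 1 *\<^sub>R 1 + inner v e *\<^sub>R e"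
proof (cases "\<forall>v::'k. v = inner v 1 *\<^sub>R 1")
  case True then show ?thesis by (intro exI[of _ 0]) auto
next
  case False
  have o: "inner (1::'k) 1 = 1" by (metis norm_one power2_norm_eq_inner one_power2)
  from False obtain v0 :: 'k where v0: "v0 \<noteq> inner v0 1 *\<^sub>R 1" by blast
  define w0 where "w0 = v0 - inner v0 1 *\<^sub>R 1"
  have w0nz: "w0 \<noteq> 0" using v0 by (simp add: w0_def)
  have w01: "inner w0 1 = 0" using o by (simp add: w0_def inner_diff_left)
  define e where "e = (1 / norm w0) *\<^sub>R w0"
  have e1: "inner e 1 = 0" using w01 by (simp add: e_def)
  have ee: "inner e e = 1" using w0nz
    by (simp add: e_def power2_norm_eq_inner[symmetric] power2_eq_square)
  have "\<forall>v. v = inner v 1 *\<^sub>R 1 + inner v e *\<^sub>R e"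
  proof
    fix v :: 'k
    define w where "w = v - inner v 1 *\<^sub>R 1 - inner v e *\<^sub>R e"
    have w1: "inner w 1 = 0" using o e1 by (simp add: w_def inner_diff_left inner_diff_right inner_commute)
    have we: "inner w e = 0" using ee e1 by (simp add: w_def inner_diff_left inner_diff_right inner_commute)
    have "w = 0"
    proof (rule ccontr)
      assume wnz: "w \<noteq> 0"
      define u where "u = (1 / norm w) *\<^sub>R w"
      have u1: "inner u 1 = 0" using w1 by (simp add: u_def)
      have ue: "inner u e = 0" using we by (simp add: u_def)
      have uu: "inner u u = 1" using wnz
        by (simp add: u_def power2_norm_eq_inner[symmetric] power2_eq_square)
      have "(u - e) * (u + e) = u*u - e*e" by (simp add: algebra_simps)
      also have "\<dots> = 0" using k_sq_orth[OF u1] k_sq_orth[OF e1] uu ee by simp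
      finally have "u - e = 0 \<or> u + e = 0" by simp
      then have "u = e \<or> u = -e" by (auto simp: eq_neg_iff_add_eq_0)
      then show False using ue ee by auto
    qed
    then show "v = inner v 1 *\<^sub>R 1 + inner v e *\<^sub>R e" by (simp add: w_def algebra_simps)
  qed
  then show ?thesis by blast
qed

lemma meas2:
  fixes u v :: "'a \<Rightarrow> 'k::{real_inner,real_normed_field}" and F :: "'k \<Rightarrow> 'k \<Rightarrow> 'b::topological_space"
  assumes u: "u \<in> borel_measurable M" and v: "v \<in> borel_measurable M"
    and F: "continuous_on UNIV (\<lambda>z. F (fst z) (snd z))"
  shows "(\<lambda>x. F (u x) (v x)) \<in> borel_measurable M"
proof -
  obtain e :: 'k where e: "\<And>v. v = inner v 1 *\<^sub>R 1 + inner v e *\<^sub>R e" using k_decomp by blast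
  define \<Phi> where "\<Phi> = (\<lambda>(a::real) (b::real). a *\<^sub>R (1::'k) + b *\<^sub>R e)"
  define H where "H = (\<lambda>z::real\<times>real\<times>real\<times>real. (\<Phi> (fst z) (fst (snd z)), \<Phi> (fst (snd (snd z))) (snd (snd (snd z)))))"
  define G where "G = (\<lambda>z. F (fst z) (snd z)) \<circ> H"
  have c1: "continuous_on UNIV H"
    unfolding H_def \<Phi>_def by (intro continuous_intros)
  have c2: "continuous_on (range H) (\<lambda>z. F (fst z) (snd z))" using F continuous_on_subset by blast
  have cG: "continuous_on UNIV G" unfolding G_def by (rule continuous_on_compose[OF c1 c2])
  have m: "\<And>w::'a\<Rightarrow>'k. \<And>c. w \<in> borel_measurable M \<Longrightarrow> (\<lambda>x. inner (w x) c) \<in> borel_measurable M"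
  proof -
    fix w :: "'a \<Rightarrow> 'k" and c :: 'k assume w: "w \<in> borel_measurable M"
    have "continuous_on UNIV (\<lambda>z. inner z c)" by (intro continuous_intros)
    from borel_measurable_continuous_on[OF this w] show "(\<lambda>x. inner (w x) c) \<in> borel_measurable M" .
  qed
  have T: "(\<lambda>x. (inner (u x) 1, inner (u x) e, inner (v x) 1, inner (v x) e)) \<in> borel_measurable M"
    using m[OF u] m[OF v] by (intro borel_measurable_Pair) auto
  have R: "(\<lambda>x. G (inner (u x) 1, inner (u x) e, inner (v x) 1, inner (v x) e)) \<in> borel_measurable M"
    by (rule borel_measurable_continuous_on[OF cG T])
  have "\<And>z. \<Phi> (inner z 1) (inner z e) = z" unfolding \<Phi>_def by (rule e[symmetric])
  then have "(\<lambda>x. G (inner (u x) 1, inner (u x) e, inner (v x) 1, inner (v x) e)) = (\<lambda>x. F (u x) (v x))"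
    by (simp add: G_def H_def)
  with R show ?thesis by simp
qed



lemma y_nonneg:
  fixes P t :: real assumes P: "1 < P" and t: "0 \<le> t"
  shows "0 \<le> t powr P / P - 1/P - (t - 1)"
proof -
  have "t * 1 \<le> t powr P / P + 1 powr (P/(P-1)) / (P/(P-1))"
    using P t by (intro Youngs_inequality) (auto simp: field_simps)
  then have h: "t \<le> t powr P / P + (P-1)/P" by simp
  have "(P-1)/P = 1 - 1/P" using P by (simp add: diff_divide_distrib)
  then show ?thesis using h by linarith
qed

lemma y_deriv:
  fixes P x :: real assumes "1 < P" "0 < x"
  shows "((\<lambda>t. t powr P / P - 1/P - (t - 1)) has_real_derivative (x powr (P-1) - 1)) (at x)"
  using assms by (auto intro!: derivative_eq_intros)

lemma y_right:
  fixes P t0 t :: real assumes P: "1 < P" and t0: "1 \<le> t0" and tt: "t0 \<le> t"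
  shows "(t0 powr (P-1) - 1) * (t - t0) \<le> t powr P / P - 1/P - (t - 1)"
proof (cases "t0 = t")
  case True then show ?thesis using y_nonneg[OF P] t0 by simp
next
  case False
  then have lt: "t0 < t" using tt by simp
  obtain z where z: "t0 < z" "z < t"
    and eq: "(t powr P / P - 1/P - (t - 1)) - (t0 powr P / P - 1/P - (t0 - 1)) = (t - t0) * (z powr (P-1) - 1)"
    using MVT2[OF lt, of "\<lambda>t. t powr P / P - 1/P - (t - 1)" "\<lambda>x. x powr (P-1) - 1"] y_deriv[OF P] t0
    by (metis (no_types, lifting) less_le_trans order.strict_trans2 zero_less_one)
  have "t0 powr (P-1) \<le> z powr (P-1)" using z t0 P by (intro powr_mono2) auto
  then have "(t0 powr (P-1) - 1) * (t - t0) \<le> (t - t0) * (z powr (P-1) - 1)"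
    using lt by (simp add: mult.commute mult_left_mono)
  moreover have "0 \<le> t0 powr P / P - 1/P - (t0 - 1)" using y_nonneg[OF P] t0 by simp
  ultimately show ?thesis using eq by linarith
qed

lemma y_left:
  fixes P t0 t :: real assumes P: "1 < P" and t: "0 < t" and tt: "t \<le> t0" and t0: "t0 \<le> 1"
  shows "(1 - t0 powr (P-1)) * (t0 - t) \<le> t powr P / P - 1/P - (t - 1)"
proof (cases "t0 = t")
  case True then show ?thesis using y_nonneg[OF P] t by simp
next
  case False
  then have lt: "t < t0" using tt by simp
  obtain z where z: "t < z" "z < t0"
    and eq: "(t0 powr P / P - 1/P - (t0 - 1)) - (t powr P / P - 1/P - (t - 1)) = (t0 - t) * (z powr (P-1) - 1)"
    using MVT2[OF lt, of "\<lambda>t. t powr P / P - 1/P - (t - 1)" "\<lambda>x. x powr (P-1) - 1"] y_deriv[OF P] t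
    by (metis (no_types, lifting) less_le_trans)
  have "z powr (P-1) \<le> t0 powr (P-1)" using z t P by (intro powr_mono2) auto
  then have "(t0 - t) * (z powr (P-1) - 1) \<le> (t0 - t) * (t0 powr (P-1) - 1)"
    using lt by (intro mult_left_mono) auto
  moreover have "0 \<le> t0 powr P / P - 1/P - (t0 - 1)" using y_nonneg[OF P] t tt by simp
  ultimately show ?thesis using eq by (simp add: algebra_simps)
qed

lemma S1:
  fixes P \<epsilon> :: real assumes P: "1 < P" and \<epsilon>: "0 < \<epsilon>"
  shows "\<exists>C\<ge>P. \<forall>t\<ge>0. \<bar>t - 1\<bar> powr P \<le> \<epsilon> * (t powr P + 1) + C * (t powr P / P - 1/P - (t - 1))"
proof -
  define y where "y = (\<lambda>t::real. t powr P / P - 1/P - (t - 1))"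
  have y0: "\<And>t. 0 \<le> t \<Longrightarrow> 0 \<le> y t" unfolding y_def using y_nonneg[OF P] by blast
  define \<delta> where "\<delta> = min (1/2) (\<epsilon> powr (1/P))"
  have \<delta>0: "0 < \<delta>" using \<epsilon> by (simp add: \<delta>_def)
  have \<delta>1: "\<delta> \<le> 1/2" by (simp add: \<delta>_def)
  have "\<delta> powr P \<le> (\<epsilon> powr (1/P)) powr P" using \<delta>0 P by (intro powr_mono2) (auto simp: \<delta>_def)
  also have "\<dots> = \<epsilon>" using P \<epsilon> by (simp add: powr_powr)
  finally have \<delta>P: "\<delta> powr P \<le> \<epsilon>" .
  define t1 where "t1 = 1 + \<delta>/2"
  define \<kappa> where "\<kappa> = t1 powr (P-1) - 1"
  have "1 powr (P-1) < t1 powr (P-1)" using P \<delta>0 by (intro powr_less_mono2) (auto simp: t1_def)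
  then have \<kappa>0: "0 < \<kappa>" by (simp add: \<kappa>_def)
  define t2 where "t2 = 1 - \<delta>/2"
  define \<kappa>2 where "\<kappa>2 = 1 - t2 powr (P-1)"
  have "t2 powr (P-1) < 1 powr (P-1)" using P \<delta>0 \<delta>1 by (intro powr_less_mono2) (auto simp: t2_def)
  then have \<kappa>20: "0 < \<kappa>2" by (simp add: \<kappa>2_def)
  define \<kappa>' where "\<kappa>' = min \<kappa>2 (1 - 1/P)"
  have \<kappa>'0: "0 < \<kappa>'" using \<kappa>20 P by (simp add: \<kappa>'_def)
  define T where "T = max 2 ((2*P) powr (1/(P-1)))"
  have T2: "2 \<le> T" by (simp add: T_def)
  have TP: "2*P \<le> T powr (P-1)"
  proof -
    have "((2*P) powr (1/(P-1))) powr (P-1) \<le> T powr (P-1)" using P by (intro powr_mono2) (auto simp: T_def)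
    moreover have "((2*P) powr (1/(P-1))) powr (P-1) = 2*P" using P by (simp add: powr_powr)
    ultimately show ?thesis by simp
  qed
  define C where "C = max P (max (2*P) (max (2 * T powr (P-1) / \<kappa>) (2/\<kappa>')))"
  have CP: "C \<ge> P" "C \<ge> 2*P" "C \<ge> 2 * T powr (P-1) / \<kappa>" "C \<ge> 2/\<kappa>'" by (auto simp: C_def)
  have main: "\<bar>t - 1\<bar> powr P \<le> \<epsilon> * (t powr P + 1) + C * y t" if t: "0 \<le> t" for t
  proof -
    have e0: "0 \<le> \<epsilon> * (t powr P + 1)" using \<epsilon> by simp
    have c0: "0 \<le> C * y t" using y0[OF t] CP P by simp
    consider "\<bar>t - 1\<bar> \<le> \<delta>" | "T \<le> t" | "1 + \<delta> < t" "t < T" | "t < 1 - \<delta>" by linarith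
    then show ?thesis
    proof cases
      case 1
      have "\<bar>t - 1\<bar> powr P \<le> \<delta> powr P" using 1 P by (intro powr_mono2) auto
      also have "\<dots> \<le> \<epsilon> * (t powr P + 1)"
      proof -
        have "\<epsilon> * 1 \<le> \<epsilon> * (t powr P + 1)" using \<epsilon> by (intro mult_left_mono) auto
        then show ?thesis using \<delta>P by simp
      qed
      finally show ?thesis using c0 by linarith
    next
      case 2
      have tpos: "0 < t" using 2 T2 by simp
      have "T powr (P-1) \<le> t powr (P-1)" using 2 T2 P by (intro powr_mono2) auto
      then have a: "2*P \<le> t powr (P-1)" using TP by simp
      have "t powr P = t * t powr (P-1)" using tpos by (simp add: powr_mult_base)
      then have b: "2*P*t \<le> t powr P" using a tpos by (simp add: mult.commute)
      have "1/P \<le> 1" using P by simp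
      then have "t powr P / P - t \<le> y t" unfolding y_def by simp
      moreover have "t \<le> t powr P / (2*P)" using b P by (simp add: field_simps)
      ultimately have "t powr P / (2*P) \<le> y t" by (simp add: field_simps)
      then have "t powr P \<le> 2*P * y t" using P by (simp add: field_simps)
      moreover have "\<bar>t - 1\<bar> powr P \<le> t powr P" using 2 T2 P by (intro powr_mono2) auto
      moreover have "2*P * y t \<le> C * y t" using CP y0[OF t] by (intro mult_right_mono) auto
      ultimately show ?thesis using e0 by linarith
    next
      case 3
      have "\<kappa> * (t - t1) \<le> y t" unfolding y_def \<kappa>_def
        using y_right[OF P, of t1 t] 3 \<delta>0 by (simp add: t1_def)
      moreover have "(t - 1)/2 \<le> t - t1" using 3 by (simp add: t1_def)
      moreover have "\<kappa> * ((t-1)/2) \<le> \<kappa> * (t - t1)" using \<kappa>0 \<open>(t - 1)/2 \<le> t - t1\<close> by (intro mult_left_mono) auto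
      ultimately have yb: "\<kappa> * ((t-1)/2) \<le> y t" by linarith
      have tm: "0 < t - 1" using 3 \<delta>0 by simp
      have "\<bar>t - 1\<bar> powr P = (t - 1) * (t-1) powr (P-1)" using tm by (simp add: powr_mult_base)
      also have "\<dots> \<le> (t - 1) * T powr (P-1)" using tm 3 P by (intro mult_left_mono powr_mono2) auto
      also have "\<dots> \<le> (2 * T powr (P-1) / \<kappa>) * y t"
      proof -
        have "(t - 1) * T powr (P-1) = (2 * T powr (P-1) / \<kappa>) * (\<kappa> * ((t-1)/2))" using \<kappa>0 by (simp add: field_simps)
        also have "\<dots> \<le> (2 * T powr (P-1) / \<kappa>) * y t" using yb \<kappa>0 by (intro mult_left_mono) auto
        finally show ?thesis .
      qed
      also have "\<dots> \<le> C * y t" using CP y0[OF t] by (intro mult_right_mono) auto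
      finally show ?thesis using e0 by linarith
    next
      case 4
      have yb: "\<kappa>' * ((1-t)/2) \<le> y t"
      proof (cases "t = 0")
        case True
        have "\<kappa>' * ((1-t)/2) \<le> \<kappa>'" using True \<kappa>'0 by simp
        also have "\<dots> \<le> 1 - 1/P" by (simp add: \<kappa>'_def)
        finally show ?thesis using True P by (simp add: y_def)
      next
        case False
        then have tp: "0 < t" using t by simp
        have "\<kappa>2 * (t2 - t) \<le> y t" unfolding y_def \<kappa>2_def
          using y_left[OF P tp, of t2] 4 \<delta>0 by (simp add: t2_def)
        moreover have "(1-t)/2 \<le> t2 - t" using 4 by (simp add: t2_def)
        moreover have "\<kappa>' \<le> \<kappa>2" by (simp add: \<kappa>'_def)
        moreover have "\<kappa>' * ((1-t)/2) \<le> \<kappa>2 * ((1-t)/2)" using 4 \<delta>0 \<kappa>'0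
          by (intro mult_right_mono) (auto simp: \<kappa>'_def)
        moreover have "\<kappa>2 * ((1-t)/2) \<le> \<kappa>2 * (t2 - t)" using 4 \<kappa>20
          by (intro mult_left_mono) (auto simp: t2_def)
        ultimately show ?thesis by linarith
      qed
      have "\<bar>t - 1\<bar> powr P \<le> \<bar>t - 1\<bar>" using 4 t \<delta>0 P by (intro powr_le_one_le) auto
      also have "\<dots> = (2/\<kappa>') * (\<kappa>' * ((1-t)/2))" using \<kappa>'0 4 \<delta>0 by (simp add: field_simps)
      also have "\<dots> \<le> (2/\<kappa>') * y t" using yb \<kappa>'0 by (intro mult_left_mono) auto
      also have "\<dots> \<le> C * y t" using CP y0[OF t] by (intro mult_right_mono) auto
      finally show ?thesis using e0 by linarith
    qed
  qed
  show ?thesis using CP main unfolding y_def by blast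
qed

lemma S1h:
  fixes P \<epsilon> :: real assumes P: "1 < P" and \<epsilon>: "0 < \<epsilon>"
  shows "\<exists>C\<ge>0. \<forall>a s. 0 \<le> a \<longrightarrow> 0 \<le> s \<longrightarrow> \<bar>s - a\<bar> powr P \<le> \<epsilon> * (s powr P + a powr P)
            + C * (s powr P / P - a powr P / P - a powr (P-1) * (s - a))"
proof -
  obtain C where CP: "C \<ge> P" and C: "\<And>t. 0 \<le> t \<Longrightarrow> \<bar>t - 1\<bar> powr P \<le> \<epsilon> * (t powr P + 1) + C * (t powr P / P - 1/P - (t - 1))"
    using S1[OF P \<epsilon>] by blast
  have "\<bar>s - a\<bar> powr P \<le> \<epsilon> * (s powr P + a powr P) + C * (s powr P / P - a powr P / P - a powr (P-1) * (s - a))"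
    if a: "0 \<le> a" and s: "0 \<le> s" for a s
  proof (cases "a = 0")
    case True
    have "s powr P \<le> C * (s powr P / P)" using CP P
      by (simp add: field_simps mult_right_mono)
    moreover have "0 \<le> \<epsilon> * s powr P" using \<epsilon> by simp
    ultimately show ?thesis using True s \<epsilon> P by (simp; linarith)
  next
    case False
    then have a0: "0 < a" using a by simp
    define t where "t = s / a"
    have t0: "0 \<le> t" using a0 s by (simp add: t_def)
    have st: "s = a * t" using a0 by (simp add: t_def)
    have ap: "0 < a powr P" using a0 by simp
    have L: "a powr P * \<bar>t - 1\<bar> powr P \<le> a powr P * (\<epsilon> * (t powr P + 1) + C * (t powr P / P - 1/P - (t - 1)))"
      using C[OF t0] ap by (intro mult_left_mono) auto
    have E1: "\<bar>s - a\<bar> powr P = a powr P * \<bar>t - 1\<bar> powr P"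
    proof -
      have "\<bar>s - a\<bar> = a * \<bar>t - 1\<bar>" using a0 st by (metis abs_mult abs_of_pos mult.right_neutral right_diff_distrib)
      then show ?thesis by (simp add: powr_mult)
    qed
    have E2: "a powr (P-1) * (s - a) = a powr P * (t - 1)"
    proof -
      have "a powr (P-1) * (s - a) = (a * a powr (P-1)) * (t - 1)" using st by (simp add: algebra_simps)
      also have "a * a powr (P-1) = a powr P" using a by (simp add: powr_mult_base)
      finally show ?thesis .
    qed
    have E3: "s powr P = a powr P * t powr P" using st by (simp add: powr_mult)
    have R: "\<epsilon> * (s powr P + a powr P) + C * (s powr P / P - a powr P / P - a powr (P-1) * (s - a))
       = a powr P * (\<epsilon> * (t powr P + 1) + C * (t powr P / P - 1/P - (t - 1)))"
      unfolding E2 E3 using P by (simp add: field_simps)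
    show ?thesis by (subst E1, subst R, rule L)
  qed
  then show ?thesis using CP P by (intro exI[of _ C]) auto
qed

lemma S2:
  fixes P \<epsilon> :: real assumes P: "1 < P" and \<epsilon>: "0 < \<epsilon>"
  shows "\<exists>C\<ge>0. \<forall>a s W. 0 \<le> a \<longrightarrow> 0 \<le> s \<longrightarrow> 0 \<le> W \<longrightarrow> W \<le> 2 * a powr (P-1) * s \<longrightarrow>
           (2 * a powr (2-P) * W) powr (P/2) \<le> \<epsilon> * (s powr P + a powr P) + C * W"
proof -
  have a2: "\<And>a::real. 0 < a \<Longrightarrow> (a*a) powr r = a powr (2*r)" for r
    by (simp add: powr_mult powr_add[symmetric])
  have Xb: "2 * a powr (2-P) * W \<le> 4 * a * s" if "0 < a" "0 \<le> s" "W \<le> 2 * a powr (P-1) * s" for a s W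
  proof -
    have "2 * a powr (2-P) * W \<le> 2 * a powr (2-P) * (2 * a powr (P-1) * s)"
      using that by (intro mult_left_mono) auto
    also have "\<dots> = 4 * (a powr (2-P) * a powr (P-1)) * s" by simp
    also have "a powr (2-P) * a powr (P-1) = a" using that by (simp add: powr_add[symmetric])
    finally show ?thesis by simp
  qed
  have aa: "\<And>a::real. a powr (P/2 - 1) * a powr (P/2 - 1) = a powr (P - 2)"
  proof -
    fix a :: real
    have e: "P/2 - 1 + (P/2 - 1) = P - 2" by simp
    show "a powr (P/2 - 1) * a powr (P/2 - 1) = a powr (P - 2)" by (simp only: powr_add[symmetric] e)
  qed
  have inv: "\<And>a::real. 0 < a \<Longrightarrow> a powr (2-P) * a powr (P-2) = 1"
    by (simp add: powr_add[symmetric])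
  show ?thesis
  proof (cases "2 \<le> P")
    case True
    define M where "M = 4 * \<epsilon> powr (-2/P)"
    have M0: "0 < M" using \<epsilon> by (simp add: M_def)
    define C where "C = 2 * (4*M) powr (P/2 - 1)"
    have "(2 * a powr (2-P) * W) powr (P/2) \<le> \<epsilon> * (s powr P + a powr P) + C * W"
      if a: "0 \<le> a" and s: "0 \<le> s" and W: "0 \<le> W" and Wb: "W \<le> 2 * a powr (P-1) * s" for a s W
    proof (cases "a = 0")
      case True
      then have "W = 0" using W Wb by simp
      then show ?thesis using \<epsilon> by simp
    next
      case False
      then have a0: "0 < a" using a by simp
      define X where "X = 2 * a powr (2-P) * W"
      have X0: "0 \<le> X" using W by (simp add: X_def)
      have Xs: "X \<le> 4 * a * s" using Xb[OF a0 s Wb] by (simp add: X_def)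
      have C0: "0 \<le> C * W" using W by (simp add: C_def)
      show ?thesis
      proof (cases "M * a \<le> s")
        case True
        have ms: "M * a * s \<le> s * s" using True s by (rule mult_right_mono)
        have "4 * a * s = (4/M) * (M * a * s)" using M0 by (simp add: field_simps)
        also have "\<dots> \<le> (4/M) * (s * s)" using ms M0 by (intro mult_left_mono) auto
        finally have "4 * a * s \<le> (4/M) * (s * s)" .
        then have "X powr (P/2) \<le> ((4/M) * (s * s)) powr (P/2)" using Xs X0 P by (intro powr_mono2) auto
        also have "\<dots> = (4/M) powr (P/2) * s powr P"
        proof (cases "s = 0")
          case False
          then have "0 < s" using s by simp
          have ss: "s powr (P/2) * s powr (P/2) = s powr P" by (simp add: powr_add[symmetric])
          show ?thesis by (simp only: powr_mult ss)
        qed simp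
        also have "(4/M) powr (P/2) = \<epsilon>"
        proof -
          have "4/M = \<epsilon> powr (2/P)" using \<epsilon> by (simp add: M_def powr_minus divide_simps)
          then show ?thesis using \<epsilon> P by (simp add: powr_powr)
        qed
        finally have "X powr (P/2) \<le> \<epsilon> * s powr P" by simp
        also have "\<dots> \<le> \<epsilon> * (s powr P + a powr P)" using \<epsilon> by simp
        finally show ?thesis using C0 by (simp add: X_def)
      next
        case False
        show ?thesis
        proof (cases "X = 0")
          case True
          have "0 \<le> \<epsilon> * (s powr P + a powr P)" using \<epsilon> by simp
          then show ?thesis using True C0 unfolding X_def[symmetric] by simp
        next
          case Xnz: False
          have "4 * a * s \<le> 4 * a * (M * a)" using False a0 by (intro mult_left_mono) auto
          then have XM: "X \<le> 4 * M * (a * a)" using Xs by (simp add: algebra_simps)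
          have "X powr (P/2) = X * X powr (P/2 - 1)" using X0 by (simp add: powr_mult_base)
          also have "\<dots> \<le> X * (4 * M * (a * a)) powr (P/2 - 1)"
            using XM X0 True by (intro mult_left_mono powr_mono2) auto
          also have "(4 * M * (a * a)) powr (P/2 - 1) = (4*M) powr (P/2 - 1) * a powr (P - 2)"
            using aa[of a] by (simp only: powr_mult mult.assoc)
          also have "X * ((4*M) powr (P/2 - 1) * a powr (P - 2)) = C * W * (a powr (2-P) * a powr (P-2))"
            by (simp add: X_def C_def algebra_simps)
          also have "\<dots> = C * W" using inv[OF a0] by simp
          finally have "X powr (P/2) \<le> C * W" .
          moreover have "0 \<le> \<epsilon> * (s powr P + a powr P)" using \<epsilon> by simp
          ultimately show ?thesis unfolding X_def by linarith
        qed
      qed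
    qed
    moreover have "0 \<le> C" by (simp add: C_def)
    ultimately show ?thesis by blast
  next
    case Psm: False
    define \<eta> where "\<eta> = \<epsilon> powr (2/P)"
    have \<eta>0: "0 < \<eta>" using \<epsilon> by (simp add: \<eta>_def)
    define C where "C = 2 * \<eta> powr (P/2 - 1)"
    have "(2 * a powr (2-P) * W) powr (P/2) \<le> \<epsilon> * (s powr P + a powr P) + C * W"
      if a: "0 \<le> a" and s: "0 \<le> s" and W: "0 \<le> W" and Wb: "W \<le> 2 * a powr (P-1) * s" for a s W
    proof (cases "a = 0")
      case True
      then have "W = 0" using W Wb by simp
      then show ?thesis using \<epsilon> by simp
    next
      case False
      then have a0: "0 < a" using a by simp
      define X where "X = 2 * a powr (2-P) * W"
      have X0: "0 \<le> X" using W by (simp add: X_def)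
      have C0: "0 \<le> C * W" using W by (simp add: C_def)
      show ?thesis
      proof (cases "\<eta> * (a * a) \<le> X")
        case True
        have pos: "0 < \<eta> * (a * a)" using \<eta>0 a0 by simp
        have "X powr (P/2) = X * X powr (P/2 - 1)" using X0 by (simp add: powr_mult_base)
        also have "\<dots> \<le> X * (\<eta> * (a * a)) powr (P/2 - 1)"
          using True pos X0 Psm P by (intro mult_left_mono powr_mono2') auto
        also have "(\<eta> * (a * a)) powr (P/2 - 1) = \<eta> powr (P/2 - 1) * a powr (P - 2)"
          using aa[of a] by (simp only: powr_mult mult.assoc)
        also have "X * (\<eta> powr (P/2 - 1) * a powr (P - 2)) = C * W * (a powr (2-P) * a powr (P-2))"
          by (simp add: X_def C_def algebra_simps)
        also have "\<dots> = C * W" using inv[OF a0] by simp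
        finally have "X powr (P/2) \<le> C * W" .
          moreover have "0 \<le> \<epsilon> * (s powr P + a powr P)" using \<epsilon> by simp
          ultimately show ?thesis unfolding X_def by linarith
      next
        case False
        have "X powr (P/2) \<le> (\<eta> * (a * a)) powr (P/2)" using False X0 P by (intro powr_mono2) auto
        also have "\<dots> = \<eta> powr (P/2) * a powr P"
        proof -
          have ss: "a powr (P/2) * a powr (P/2) = a powr P" by (simp add: powr_add[symmetric])
          show ?thesis by (simp only: powr_mult ss)
        qed
        also have "\<eta> powr (P/2) = \<epsilon>" using \<epsilon> P by (simp add: \<eta>_def powr_powr)
        finally have "X powr (P/2) \<le> \<epsilon> * a powr P" .
        also have "\<dots> \<le> \<epsilon> * (s powr P + a powr P)" using \<epsilon> by simp
        finally show ?thesis using C0 by (simp add: X_def)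
      qed
    qed
    moreover have "0 \<le> C" using \<eta>0 by (simp add: C_def)
    ultimately show ?thesis by blast
  qed
qed



lemma powr_sum_le:
  fixes x y r :: real assumes "0 \<le> x" "0 \<le> y" "0 \<le> r"
  shows "(x + y) powr r \<le> 2 powr r * (x powr r + y powr r)"
proof -
  have "(x + y) powr r \<le> (2 * max x y) powr r" using assms by (intro powr_mono2) auto
  also have "\<dots> = 2 powr r * max x y powr r" by (simp add: powr_mult)
  also have "max x y powr r \<le> x powr r + y powr r" by (simp add: max_def)
  then have "2 powr r * max x y powr r \<le> 2 powr r * (x powr r + y powr r)" by (intro mult_left_mono) auto
  finally show ?thesis .
qed

lemma sq_powr: fixes z P :: real assumes "0 \<le> z" shows "(z^2) powr (P/2) = z powr P"
proof -
  have "z^2 = z powr 2" using assms by (simp add: powr_numeral)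
  then show ?thesis by (simp add: powr_powr)
qed

lemma PW:
  fixes P Q \<epsilon> :: real assumes P: "1 < P" and Q: "Q = P/(P-1)" and \<epsilon>: "0 < \<epsilon>"
  shows "\<exists>C\<ge>0. \<forall>(h::'k::real_inner) v. norm (v - norm h powr (Q-2) *\<^sub>R h) powr P
     \<le> \<epsilon> * (norm v powr P + norm h powr Q) + C * (norm h powr Q / Q + norm v powr P / P - inner h v)"
proof -
  define \<epsilon>' where "\<epsilon>' = \<epsilon> / (2 * 2 powr (P/2))"
  have \<epsilon>'0: "0 < \<epsilon>'" using \<epsilon> by (simp add: \<epsilon>'_def)
  obtain C1 where C1: "C1 \<ge> 0" "\<And>a s. 0 \<le> a \<Longrightarrow> 0 \<le> s \<Longrightarrow> \<bar>s - a\<bar> powr P \<le> \<epsilon>' * (s powr P + a powr P)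
            + C1 * (s powr P / P - a powr P / P - a powr (P-1) * (s - a))"
    using S1h[OF P \<epsilon>'0] by blast
  obtain C2 where C2: "C2 \<ge> 0" "\<And>a s W. 0 \<le> a \<Longrightarrow> 0 \<le> s \<Longrightarrow> 0 \<le> W \<Longrightarrow> W \<le> 2 * a powr (P-1) * s \<Longrightarrow>
           (2 * a powr (2-P) * W) powr (P/2) \<le> \<epsilon>' * (s powr P + a powr P) + C2 * W"
    using S2[OF P \<epsilon>'0] by blast
  have Q1: "1 < Q" using P by (simp add: Q field_simps)
  have QP: "(Q-1)*P = Q" "(Q-1)*(P-1) = 1" "(Q-1)*(2-P) = Q-2" "1/Q = 1 - 1/P"
    using P by (simp_all add: Q field_simps)
  define C where "C = 2 powr (P/2) * (C1 + C2)"
  have "norm (v - norm h powr (Q-2) *\<^sub>R h) powr P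
     \<le> \<epsilon> * (norm v powr P + norm h powr Q) + C * (norm h powr Q / Q + norm v powr P / P - inner h v)"
    for h v :: 'k
  proof -
    define b where "b = norm h"
    define a where "a = b powr (Q-1)"
    define s where "s = norm v"
    define c where "c = inner h v"
    define W where "W = b * s - c"
    define Y where "Y = b powr Q / Q + s powr P / P - b * s"
    have b0: "0 \<le> b" and s0: "0 \<le> s" and a0: "0 \<le> a" by (auto simp: b_def s_def a_def)
    have F1: "a powr P = b powr Q" unfolding a_def by (simp add: powr_powr QP)
    have F2: "a powr (P-1) = b" unfolding a_def using b0 by (simp add: powr_powr QP)
    have F3: "a powr (2-P) = b powr (Q-2)" unfolding a_def by (simp add: powr_powr QP)
    have F4: "b powr (Q-2) * b = a"
    proof (cases "b = 0")
      case False
      have "b powr (Q-1) = b powr ((Q-2) + 1)" by simp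
      also have "\<dots> = b powr (Q-2) * b powr 1" by (rule powr_add)
      also have "\<dots> = b powr (Q-2) * b" using b0 by simp
      finally show ?thesis by (simp add: a_def)
    qed (simp add: a_def)
    have W0: "0 \<le> W" unfolding W_def b_def s_def c_def by (simp add: norm_cauchy_schwarz)
    have Wb: "W \<le> 2 * a powr (P-1) * s"
    proof -
      have "- c \<le> b * s" unfolding b_def s_def c_def
        by (metis abs_le_iff Cauchy_Schwarz_ineq2)
      then show ?thesis unfolding F2 W_def by simp
    qed
    have Yeq: "Y = s powr P / P - a powr P / P - a powr (P-1) * (s - a)"
    proof -
      have "a powr (P-1) * a = a powr P" using powr_mult_base[OF a0, of "P-1"] by (simp add: mult.commute)
      moreover have "b powr Q / P + b powr Q / Q = b powr Q"
      proof -
        have "b powr Q / P + b powr Q / Q = b powr Q * (1/P + 1/Q)" by (simp add: distrib_left)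
        then show ?thesis using QP(4) by simp
      qed
      ultimately show ?thesis using F1 F2 unfolding Y_def by (simp add: algebra_simps)
    qed
    have Y0: "0 \<le> Y"
    proof -
      have "b * s \<le> b powr Q / Q + s powr P / P"
        using Youngs_inequality[of Q P b s] Q1 P b0 s0 QP(4) by simp
      then show ?thesis unfolding Y_def by simp
    qed
    have D: "norm h powr Q / Q + norm v powr P / P - inner h v = Y + W"
      unfolding Y_def W_def b_def s_def c_def by simp
    have N: "(norm (v - b powr (Q-2) *\<^sub>R h))^2 = (s - a)^2 + 2 * b powr (Q-2) * W"
    proof -
      define r where "r = b powr (Q-2)"
      have vv: "inner v v = s^2" by (simp add: s_def power2_norm_eq_inner)
      have hh: "inner h h = b^2" by (simp add: b_def power2_norm_eq_inner)
      have "(norm (v - b powr (Q-2) *\<^sub>R h))^2 = inner (v - r *\<^sub>R h) (v - r *\<^sub>R h)"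
        unfolding r_def by (rule power2_norm_eq_inner)
      also have "\<dots> = inner v v - 2 * r * inner h v + r * r * inner h h"
        by (simp add: inner_diff_left inner_diff_right inner_commute algebra_simps)
      also have "\<dots> = s^2 - 2 * b powr (Q-2) * c + (b powr (Q-2) * b)^2"
        unfolding vv hh r_def c_def by (simp add: power2_eq_square algebra_simps)
      finally have "(norm (v - b powr (Q-2) *\<^sub>R h))^2 = s^2 - 2 * b powr (Q-2) * c + (b powr (Q-2) * b)^2" .
      also have "\<dots> = (s - a)^2 + 2 * b powr (Q-2) * W"
        unfolding F4 W_def using F4 by (simp add: power2_eq_square algebra_simps)
      finally show ?thesis .
    qed
    have "norm (v - b powr (Q-2) *\<^sub>R h) powr P = ((norm (v - b powr (Q-2) *\<^sub>R h))^2) powr (P/2)"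
      by (simp add: sq_powr)
    also have "\<dots> = ((s - a)^2 + 2 * b powr (Q-2) * W) powr (P/2)" using N by simp
    also have "\<dots> \<le> 2 powr (P/2) * (((s - a)^2) powr (P/2) + (2 * b powr (Q-2) * W) powr (P/2))"
      using W0 P by (intro powr_sum_le) auto
    also have "((s - a)^2) powr (P/2) = \<bar>s - a\<bar> powr P" by (metis sq_powr abs_ge_zero power2_abs)
    also have "2 * b powr (Q-2) * W = 2 * a powr (2-P) * W" using F3 by simp
    also have "2 powr (P/2) * (\<bar>s - a\<bar> powr P + (2 * a powr (2-P) * W) powr (P/2))
       \<le> 2 powr (P/2) * ((\<epsilon>' * (s powr P + a powr P) + C1 * Y) + (\<epsilon>' * (s powr P + a powr P) + C2 * W))"
      using C1(2)[OF a0 s0] C2(2)[OF a0 s0 W0 Wb] Yeq by (intro mult_left_mono add_mono) auto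
    also have "\<dots> = \<epsilon> * (s powr P + b powr Q) + 2 powr (P/2) * (C1 * Y + C2 * W)"
      unfolding F1 \<epsilon>'_def by (simp add: field_simps)
    also have "C1 * Y + C2 * W \<le> (C1 + C2) * (Y + W)"
      using C1(1) C2(1) Y0 W0 by (simp add: algebra_simps)
    then have "\<epsilon> * (s powr P + b powr Q) + 2 powr (P/2) * (C1 * Y + C2 * W) \<le> \<epsilon> * (s powr P + b powr Q) + C * (Y + W)"
      unfolding C_def by (simp add: mult.assoc mult_left_mono)
    finally show ?thesis unfolding D by (simp add: b_def s_def)
  qed
  moreover have "0 \<le> C" using C1(1) C2(1) by (simp add: C_def)
  ultimately show ?thesis by blast
qed



lemma meas_scale:
  fixes f :: "'a \<Rightarrow> real" and u :: "'a \<Rightarrow> 'k::{real_inner,real_normed_field}"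
  assumes f: "f \<in> borel_measurable M" and u: "u \<in> borel_measurable M"
  shows "(\<lambda>x. f x *\<^sub>R u x) \<in> borel_measurable M"
proof -
  obtain e :: 'k where e: "\<And>v. v = inner v 1 *\<^sub>R 1 + inner v e *\<^sub>R e" using k_decomp by blast
  define G where "G = (\<lambda>z::real\<times>real. fst z *\<^sub>R (1::'k) + snd z *\<^sub>R e)"
  have cG: "continuous_on UNIV G" unfolding G_def by (intro continuous_intros)
  have m: "\<And>c. (\<lambda>x. inner (u x) c) \<in> borel_measurable M"
  proof -
    fix c :: 'k
    have "continuous_on UNIV (\<lambda>z. inner z c)" by (intro continuous_intros)
    from borel_measurable_continuous_on[OF this u] show "(\<lambda>x. inner (u x) c) \<in> borel_measurable M" .
  qed
  have T: "(\<lambda>x. (f x * inner (u x) 1, f x * inner (u x) e)) \<in> borel_measurable M"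
    using m f by (intro borel_measurable_Pair borel_measurable_times) auto
  have R: "(\<lambda>x. G (f x * inner (u x) 1, f x * inner (u x) e)) \<in> borel_measurable M"
    by (rule borel_measurable_continuous_on[OF cG T])
  have "\<And>x. G (f x * inner (u x) 1, f x * inner (u x) e) = f x *\<^sub>R u x"
  proof -
    fix x
    have "f x *\<^sub>R u x = f x *\<^sub>R (inner (u x) 1 *\<^sub>R 1 + inner (u x) e *\<^sub>R e)" using e[of "u x"] by simp
    then show "G (f x * inner (u x) 1, f x * inner (u x) e) = f x *\<^sub>R u x"
      by (simp add: G_def scaleR_add_right)
  qed
  with R show ?thesis by simp
qed

lemma meas_norm:
  fixes u :: "'a \<Rightarrow> 'k::real_normed_vector"
  assumes "u \<in> borel_measurable M" shows "(\<lambda>x. norm (u x)) \<in> borel_measurable M"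
  using assms by measurable

lemma meas_cscale:
  fixes u :: "'a \<Rightarrow> 'k::real_normed_vector"
  assumes u: "u \<in> borel_measurable M" shows "(\<lambda>x. c *\<^sub>R u x) \<in> borel_measurable M"
proof -
  have "continuous_on UNIV (\<lambda>z::'k. c *\<^sub>R z)" by (intro continuous_intros)
  from borel_measurable_continuous_on[OF this u] show ?thesis .
qed

lemma meas_diff:
  fixes u v :: "'a \<Rightarrow> 'k::{real_inner,real_normed_field}"
  assumes "u \<in> borel_measurable M" "v \<in> borel_measurable M"
  shows "(\<lambda>x. u x - v x) \<in> borel_measurable M"
  using meas2[OF assms, of "\<lambda>a b. a - b"] by (simp add: continuous_on_diff continuous_on_fst continuous_on_snd continuous_on_id)

lemma meas_inner:
  fixes u v :: "'a \<Rightarrow> 'k::{real_inner,real_normed_field}"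
  assumes "u \<in> borel_measurable M" "v \<in> borel_measurable M"
  shows "(\<lambda>x. inner (u x) (v x)) \<in> borel_measurable M"
  using meas2[OF assms, of "\<lambda>a b. inner a b"] by (simp add: continuous_on_inner continuous_on_fst continuous_on_snd continuous_on_id)

lemma Lq_norm_nonneg: "0 \<le> Lq_norm M q u"
  by (simp add: Lq_norm_def)

lemma Lq_int_eq:
  assumes "0 < q"
  shows "(\<integral>x. norm (u x) powr q \<partial>M) = Lq_norm M q u powr q"
proof -
  have "0 \<le> (\<integral>x. norm (u x) powr q \<partial>M)" by simp
  then show ?thesis using assms by (simp add: Lq_norm_def powr_powr)
qed

lemma holder_nn:
  fixes f g :: "'a \<Rightarrow> real" and p q :: real
  assumes p: "1 < p" and q: "1 < q" and pq: "1/p + 1/q = 1"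
    and fm: "f \<in> borel_measurable M" and gm: "g \<in> borel_measurable M"
    and f0: "\<And>x. 0 \<le> f x" and g0: "\<And>x. 0 \<le> g x"
    and fi: "integrable M (\<lambda>x. f x powr p)" and gi: "integrable M (\<lambda>x. g x powr q)"
  shows "integrable M (\<lambda>x. f x * g x) \<and>
    (\<integral>x. f x * g x \<partial>M) \<le> (\<integral>x. f x powr p \<partial>M) powr (1/p) * (\<integral>x. g x powr q \<partial>M) powr (1/q)"
proof -
  have Y: "\<And>x. f x * g x \<le> f x powr p / p + g x powr q / q"
    using Youngs_inequality p q pq f0 g0 by blast
  have int: "integrable M (\<lambda>x. f x * g x)"
  proof (rule Bochner_Integration.integrable_bound[of _ "\<lambda>x. f x powr p / p + g x powr q / q"])
    show "integrable M (\<lambda>x. f x powr p / p + g x powr q / q)" using fi gi by auto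
    show "(\<lambda>x. f x * g x) \<in> borel_measurable M" using fm gm by measurable
    show "AE x in M. norm (f x * g x) \<le> norm (f x powr p / p + g x powr q / q)"
      using Y f0 g0 p q by (auto intro!: AE_I2 simp: abs_mult)
  qed
  define A where "A = (\<integral>x. f x powr p \<partial>M)"
  define B where "B = (\<integral>x. g x powr q \<partial>M)"
  have A0: "0 \<le> A" and B0: "0 \<le> B" by (simp_all add: A_def B_def)
  have bound: "(\<integral>x. f x * g x \<partial>M) \<le> A powr (1/p) * B powr (1/q)"
  proof (cases "A = 0 \<or> B = 0")
    case True
    then have "(AE x in M. f x powr p = 0) \<or> (AE x in M. g x powr q = 0)"
      using integral_nonneg_eq_0_iff_AE[OF fi] integral_nonneg_eq_0_iff_AE[OF gi]
      by (auto simp: A_def B_def)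
    then have "AE x in M. f x * g x = 0" by (auto elim: AE_mp)
    then have "(\<integral>x. f x * g x \<partial>M) = 0" by (rule integral_eq_zero_AE)
    then show ?thesis by simp
  next
    case False
    then have Ap: "0 < A" and Bp: "0 < B" using A0 B0 by auto
    define a where "a = A powr (1/p)"
    define b where "b = B powr (1/q)"
    have ap: "0 < a" and bp: "0 < b" using Ap Bp by (simp_all add: a_def b_def)
    have aP: "a powr p = A" using Ap p by (simp add: a_def powr_powr)
    have bQ: "b powr q = B" using Bp q by (simp add: b_def powr_powr)
    have pw: "\<And>x. f x * g x / (a * b) \<le> f x powr p / (p * A) + g x powr q / (q * B)"
    proof -
      fix x
      have "(f x / a) * (g x / b) \<le> (f x / a) powr p / p + (g x / b) powr q / q"
        using Youngs_inequality[OF p q pq, of "f x / a" "g x / b"] f0 g0 ap bp by simp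
      then show "f x * g x / (a * b) \<le> f x powr p / (p * A) + g x powr q / (q * B)"
        using aP bQ by (simp add: powr_divide mult.commute)
    qed
    have "(\<integral>x. f x * g x \<partial>M) / (a * b) = (\<integral>x. f x * g x / (a * b) \<partial>M)" by simp
    also have "\<dots> \<le> (\<integral>x. f x powr p / (p * A) + g x powr q / (q * B) \<partial>M)"
      using int fi gi pw by (intro integral_mono) auto
    also have "\<dots> = A / (p * A) + B / (q * B)" using fi gi by (simp add: A_def B_def)
    also have "\<dots> = 1" using Ap Bp pq p q by simp
    finally have "(\<integral>x. f x * g x \<partial>M) \<le> a * b" using ap bp by (simp add: field_simps)
    then show ?thesis by (simp add: a_def b_def)
  qed
  show ?thesis using int bound by (simp add: A_def B_def)
qed

lemma holder:
  fixes u v :: "'a \<Rightarrow> 'k::{real_inner,real_normed_field}"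
  assumes p: "1 < p" and q: "1 < q" and pq: "1/p + 1/q = 1"
    and u: "u \<in> Lq_space M p" and v: "v \<in> Lq_space M q"
  shows "integrable M (\<lambda>x. norm (u x) * norm (v x)) \<and>
    (\<integral>x. norm (u x) * norm (v x) \<partial>M) \<le> Lq_norm M p u * Lq_norm M q v"
  using holder_nn[OF p q pq, of "\<lambda>x. norm (u x)" M "\<lambda>x. norm (v x)"] u v
  by (auto simp: Lq_space_def Lq_norm_def intro: meas_norm)

lemma holder_inner:
  fixes u v :: "'a \<Rightarrow> 'k::{real_inner,real_normed_field}"
  assumes p: "1 < p" and q: "1 < q" and pq: "1/p + 1/q = 1"
    and u: "u \<in> Lq_space M p" and v: "v \<in> Lq_space M q"
  shows "integrable M (\<lambda>x. inner (u x) (v x)) \<and>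
    \<bar>\<integral>x. inner (u x) (v x) \<partial>M\<bar> \<le> Lq_norm M p u * Lq_norm M q v"
proof -
  from holder[OF p q pq u v] have hi: "integrable M (\<lambda>x. norm (u x) * norm (v x))"
    and hb: "(\<integral>x. norm (u x) * norm (v x) \<partial>M) \<le> Lq_norm M p u * Lq_norm M q v" by auto
  have um: "u \<in> borel_measurable M" and vm: "v \<in> borel_measurable M" using u v by (auto simp: Lq_space_def)
  have cs: "\<And>x. \<bar>inner (u x) (v x)\<bar> \<le> norm (u x) * norm (v x)" by (rule Cauchy_Schwarz_ineq2)
  have int: "integrable M (\<lambda>x. inner (u x) (v x))"
    by (rule Bochner_Integration.integrable_bound[OF hi meas_inner[OF um vm]]) (auto intro!: AE_I2 simp: cs)
  have "(\<integral>x. inner (u x) (v x) \<partial>M) \<le> (\<integral>x. norm (u x) * norm (v x) \<partial>M)"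
    using int hi cs by (intro integral_mono) (auto simp: abs_le_iff)
  moreover have "- (\<integral>x. inner (u x) (v x) \<partial>M) \<le> (\<integral>x. norm (u x) * norm (v x) \<partial>M)"
  proof -
    have "(\<integral>x. - inner (u x) (v x) \<partial>M) \<le> (\<integral>x. norm (u x) * norm (v x) \<partial>M)"
      using int hi cs by (intro integral_mono) (auto simp: abs_le_iff)
    then show ?thesis by simp
  qed
  ultimately show ?thesis using int hb by linarith
qed

lemma Lq_diff:
  fixes u v :: "'a \<Rightarrow> 'k::{real_inner,real_normed_field}"
  assumes q: "0 < q" and u: "u \<in> Lq_space M q" and v: "v \<in> Lq_space M q"
  shows "(\<lambda>x. u x - v x) \<in> Lq_space M q"
proof -
  have um: "u \<in> borel_measurable M" and vm: "v \<in> borel_measurable M"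
    and ui: "integrable M (\<lambda>x. norm (u x) powr q)" and vi: "integrable M (\<lambda>x. norm (v x) powr q)"
    using u v by (auto simp: Lq_space_def)
  have dm: "(\<lambda>x. u x - v x) \<in> borel_measurable M" by (rule meas_diff[OF um vm])
  have b: "norm (u x - v x) powr q \<le> 2 powr q * (norm (u x) powr q + norm (v x) powr q)" for x
  proof -
    have "norm (u x - v x) powr q \<le> (norm (u x) + norm (v x)) powr q"
      using q by (intro powr_mono2) (auto simp: norm_triangle_ineq4)
    also have "\<dots> \<le> 2 powr q * (norm (u x) powr q + norm (v x) powr q)"
      using q by (intro powr_sum_le) auto
    finally show ?thesis .
  qed
  have "integrable M (\<lambda>x. norm (u x - v x) powr q)"
  proof (rule Bochner_Integration.integrable_bound[of _ "\<lambda>x. 2 powr q * (norm (u x) powr q + norm (v x) powr q)"])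
    show "integrable M (\<lambda>x. 2 powr q * (norm (u x) powr q + norm (v x) powr q))" using ui vi by auto
    show "(\<lambda>x. norm (u x - v x) powr q) \<in> borel_measurable M" using meas_norm[OF dm] by measurable
    show "AE x in M. norm (norm (u x - v x) powr q) \<le> norm (2 powr q * (norm (u x) powr q + norm (v x) powr q))"
      using b by (auto intro!: AE_I2)
  qed
  with dm show ?thesis by (simp add: Lq_space_def)
qed

lemma DM:
  fixes u :: "'a \<Rightarrow> 'k::{real_inner,real_normed_field}"
  assumes q: "1 < q" and q': "q' = q/(q-1)" and u: "u \<in> Lq_space M q" and N: "0 < Lq_norm M q u"
  shows "duality_map M q u \<in> Lq_space M q' \<and> Lq_norm M q' (duality_map M q u) = 1
     \<and> (\<integral>x. inner (u x) (duality_map M q u x) \<partial>M) = Lq_norm M q u"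
proof -
  define N where "N = Lq_norm M q u"
  have um: "u \<in> borel_measurable M" and ui: "integrable M (\<lambda>x. norm (u x) powr q)"
    using u by (auto simp: Lq_space_def)
  have I: "(\<integral>x. norm (u x) powr q \<partial>M) = N powr q" using Lq_int_eq[of q M u] q by (simp add: N_def)
  have N0: "0 < N" using N by (simp add: N_def)
  have q'1: "(1-q)*q' = -q" "(q-1)*q' = q" "1 < q'" using q by (simp_all add: q' field_simps)
  have J: "duality_map M q u = (\<lambda>x. (N powr (1-q) * norm (u x) powr (q-2)) *\<^sub>R u x)"
    by (simp add: duality_map_def N_def)
  have Jm: "duality_map M q u \<in> borel_measurable M"
    unfolding J by (intro meas_scale um) (use um in measurable)
  have nq: "norm (u x) powr (q-2) * norm (u x) = norm (u x) powr (q-1)" for x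
  proof (cases "u x = 0")
    case False
    have "norm (u x) powr (q-1) = norm (u x) powr ((q-2) + 1)" by simp
    also have "\<dots> = norm (u x) powr (q-2) * norm (u x) powr 1" by (rule powr_add)
    finally show ?thesis by simp
  qed simp
  have nJ: "norm (duality_map M q u x) = N powr (1-q) * norm (u x) powr (q-1)" for x
    unfolding J using nq[of x] by (simp add: mult.assoc)
  have nJq: "norm (duality_map M q u x) powr q' = N powr (-q) * norm (u x) powr q" for x
    unfolding nJ by (simp add: powr_mult powr_powr q'1)
  have Ji: "integrable M (\<lambda>x. norm (duality_map M q u x) powr q')"
    unfolding nJq using ui by simp
  have "(\<integral>x. norm (duality_map M q u x) powr q' \<partial>M) = N powr (-q) * N powr q"
    unfolding nJq using I by simp
  also have "\<dots> = 1" using N0 by (simp add: powr_add[symmetric])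
  finally have L: "Lq_norm M q' (duality_map M q u) = 1" by (simp add: Lq_norm_def)
  have inn: "inner (u x) (duality_map M q u x) = N powr (1-q) * norm (u x) powr q" for x
  proof -
    have "inner (u x) (duality_map M q u x) = N powr (1-q) * (norm (u x) powr (q-2) * (norm (u x) * norm (u x)))"
      unfolding J by (simp add: power2_norm_eq_inner[symmetric] power2_eq_square)
    also have "norm (u x) powr (q-2) * (norm (u x) * norm (u x)) = norm (u x) powr q"
    proof (cases "u x = 0")
      case False
      have "norm (u x) powr q = norm (u x) powr ((q-2) + 2)" by simp
      also have "\<dots> = norm (u x) powr (q-2) * norm (u x) powr 2" by (rule powr_add)
      also have "\<dots> = norm (u x) powr (q-2) * (norm (u x) * norm (u x))" by (simp add: powr_numeral power2_eq_square)
      finally show ?thesis by simp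
    qed simp
    finally show ?thesis .
  qed
  have "(\<integral>x. inner (u x) (duality_map M q u x) \<partial>M) = N powr (1-q) * N powr q"
    unfolding inn using I by simp
  also have "\<dots> = N" using N0 by (simp add: powr_add[symmetric])
  finally show ?thesis using L Jm Ji by (simp add: Lq_space_def N_def)
qed



context
  fixes M :: "'a measure"
    and q q' :: real
    and A :: "'h::{real_inner,complete_space} \<Rightarrow> 'a \<Rightarrow> 'k::{real_inner,real_normed_field}"
    and Astar :: "('a \<Rightarrow> 'k) \<Rightarrow> 'h"
    and \<alpha> :: real
  assumes q: "1 < q" and q': "q' = q / (q - 1)"
    and A_into: "\<And>f. A f \<in> Lq_space M q"
    and A_scale: "\<And>c f. AE x in M. A (c *\<^sub>R f) x = c *\<^sub>R A f x"
    and A_bounded: "\<exists>C. \<forall>f. Lq_norm M q (A f) \<le> C * norm f"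
    and adjoint: "\<And>g f. g \<in> Lq_space M q' \<Longrightarrow> inner f (Astar g) = (\<integral>x. inner (A f x) (g x) \<partial>M)"
    and alpha: "\<alpha> = op_norm_Lq M q A"
    and alpha_pos: "\<alpha> > 0"
begin

lemma qq: "1 < q'" "1/q + 1/q' = 1" "q = q'/(q'-1)"
  using q by (simp_all add: q' field_simps)

lemma A_meas: "A f \<in> borel_measurable M"
  using A_into by (simp add: Lq_space_def)

lemma Am: "(\<lambda>x. norm (A g x) powr q) \<in> borel_measurable M"
  using meas_norm[OF A_meas] by measurable

lemma O1: "Lq_norm M q (A (c *\<^sub>R f)) = \<bar>c\<bar> * Lq_norm M q (A f)"
proof -
  have ae: "AE x in M. norm (A (c *\<^sub>R f) x) powr q = \<bar>c\<bar> powr q * norm (A f x) powr q"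
    using A_scale[of c f] by eventually_elim (simp add: powr_mult)
  have "(\<integral>x. norm (A (c *\<^sub>R f) x) powr q \<partial>M) = (\<integral>x. \<bar>c\<bar> powr q * norm (A f x) powr q \<partial>M)"
    using ae Am[of "c *\<^sub>R f"] Am[of f] by (intro integral_cong_AE) auto
  also have "\<dots> = \<bar>c\<bar> powr q * (\<integral>x. norm (A f x) powr q \<partial>M)" by simp
  finally have "Lq_norm M q (A (c *\<^sub>R f)) = (\<bar>c\<bar> powr q * (\<integral>x. norm (A f x) powr q \<partial>M)) powr (1/q)"
    by (simp add: Lq_norm_def)
  also have "\<dots> = \<bar>c\<bar> * Lq_norm M q (A f)"
    using q by (simp add: powr_mult powr_powr Lq_norm_def)
  finally show ?thesis .
qed

lemma A0: "Lq_norm M q (A 0) = 0"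
  using O1[of 0 0] by simp

lemma O2: "Lq_norm M q (A f) \<le> \<alpha> * norm f"
proof -
  obtain C where C: "\<And>f. Lq_norm M q (A f) \<le> C * norm f" using A_bounded by blast
  have bdd: "bdd_above ((\<lambda>f. Lq_norm M q (A f)) ` {f. norm f \<le> 1})"
  proof (rule bdd_aboveI2)
    fix f :: 'h assume "f \<in> {f. norm f \<le> 1}"
    then have "norm f \<le> 1" by simp
    have "C * norm f \<le> \<bar>C\<bar> * norm f" by (simp add: mult_right_mono)
    also have "\<dots> \<le> \<bar>C\<bar>" using \<open>norm f \<le> 1\<close> by (simp add: mult_left_le)
    finally show "Lq_norm M q (A f) \<le> \<bar>C\<bar>" using C[of f] by linarith
  qed
  have le1: "Lq_norm M q (A g) \<le> \<alpha>" if "norm g \<le> 1" for g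
    unfolding alpha op_norm_Lq_def using that bdd by (intro cSUP_upper) auto
  show ?thesis
  proof (cases "f = 0")
    case True then show ?thesis using A0 by simp
  next
    case False
    define g where "g = (1 / norm f) *\<^sub>R f"
    have "f = norm f *\<^sub>R g" using False by (simp add: g_def)
    then have "Lq_norm M q (A f) = norm f * Lq_norm M q (A g)" using O1[of "norm f" g] by simp
    also have "\<dots> \<le> norm f * \<alpha>" using le1[of g] False by (intro mult_left_mono) (auto simp: g_def)
    finally show ?thesis by (simp add: mult.commute)
  qed
qed

lemma O5:
  assumes g: "g \<in> Lq_space M q'"
  shows "\<bar>inner f (Astar g)\<bar> \<le> Lq_norm M q (A f) * Lq_norm M q' g"
  using adjoint[OF g, of f] holder_inner[OF q qq(1) qq(2) A_into g] by simp

lemma O3: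
  assumes g: "g \<in> Lq_space M q'"
  shows "norm (Astar g) \<le> \<alpha> * Lq_norm M q' g"
proof -
  define d where "d = Astar g"
  have "norm d * norm d = inner d (Astar g)" by (simp add: d_def power2_norm_eq_inner[symmetric] power2_eq_square)
  also have "\<dots> \<le> Lq_norm M q (A d) * Lq_norm M q' g" using O5[OF g, of d] by simp
  also have "\<dots> \<le> (\<alpha> * norm d) * Lq_norm M q' g" using O2[of d] Lq_norm_nonneg[of M q' g]
    by (intro mult_right_mono) auto
  finally have "norm d * norm d \<le> norm d * (\<alpha> * Lq_norm M q' g)" by (simp add: algebra_simps)
  then show ?thesis unfolding d_def[symmetric]
    using alpha_pos Lq_norm_nonneg[of M q' g]
    by (cases "norm d = 0") (auto simp: mult_le_cancel_left_pos)
qed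

lemma O4:
  assumes g1: "g1 \<in> Lq_space M q'" and g2: "g2 \<in> Lq_space M q'"
  shows "norm (Astar g1 - Astar g2) \<le> \<alpha> * Lq_norm M q' (\<lambda>x. g1 x - g2 x)"
proof -
  define d where "d = Astar g1 - Astar g2"
  have gd: "(\<lambda>x. g1 x - g2 x) \<in> Lq_space M q'" using Lq_diff[OF _ g1 g2] qq by simp
  have i1: "integrable M (\<lambda>x. inner (A d x) (g1 x))" using holder_inner[OF q qq(1) qq(2) A_into g1] by simp
  have i2: "integrable M (\<lambda>x. inner (A d x) (g2 x))" using holder_inner[OF q qq(1) qq(2) A_into g2] by simp
  have hd: "\<bar>\<integral>x. inner (A d x) (g1 x - g2 x) \<partial>M\<bar> \<le> Lq_norm M q (A d) * Lq_norm M q' (\<lambda>x. g1 x - g2 x)"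
    using holder_inner[OF q qq(1) qq(2) A_into gd] by simp
  have "norm d * norm d = inner d d" by (metis power2_norm_eq_inner power2_eq_square)
  also have "\<dots> = inner d (Astar g1) - inner d (Astar g2)" by (simp only: d_def inner_diff_right)
  also have "\<dots> = (\<integral>x. inner (A d x) (g1 x) \<partial>M) - (\<integral>x. inner (A d x) (g2 x) \<partial>M)"
    using adjoint[OF g1] adjoint[OF g2] by simp
  also have "\<dots> = (\<integral>x. inner (A d x) (g1 x - g2 x) \<partial>M)"
    using i1 i2 by (simp add: inner_diff_right)
  also have "\<dots> \<le> Lq_norm M q (A d) * Lq_norm M q' (\<lambda>x. g1 x - g2 x)" using hd by linarith
  also have "\<dots> \<le> (\<alpha> * norm d) * Lq_norm M q' (\<lambda>x. g1 x - g2 x)"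
    using O2[of d] Lq_norm_nonneg[of M q' "\<lambda>x. g1 x - g2 x"] by (intro mult_right_mono) auto
  finally have "norm d * norm d \<le> norm d * (\<alpha> * Lq_norm M q' (\<lambda>x. g1 x - g2 x))" by (simp add: algebra_simps)
  then show ?thesis unfolding d_def[symmetric]
    using alpha_pos Lq_norm_nonneg[of M q' "\<lambda>x. g1 x - g2 x"]
    by (cases "norm d = 0") (auto simp: mult_le_cancel_left_pos)
qed

lemma part_a1:
  "\<forall>f. norm f = 1 \<and> Lq_norm M q (A f) = \<alpha> \<longrightarrow>
        (let g = duality_map M q (A f) in
          g \<in> Lq_space M q' \<and> Lq_norm M q' g = 1 \<and> norm (Astar g) = \<alpha>)"
proof (intro allI impI)
  fix f assume f: "norm f = 1 \<and> Lq_norm M q (A f) = \<alpha>"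
  define g where "g = duality_map M q (A f)"
  have D: "g \<in> Lq_space M q' \<and> Lq_norm M q' g = 1 \<and> (\<integral>x. inner (A f x) (g x) \<partial>M) = \<alpha>"
    using DM[OF q q' A_into, of f] f alpha_pos by (simp add: g_def)
  then have "inner f (Astar g) = \<alpha>" using adjoint by simp
  moreover have "inner f (Astar g) \<le> norm (Astar g)" using norm_cauchy_schwarz[of f "Astar g"] f by simp
  moreover have "norm (Astar g) \<le> \<alpha>" using O3[of g] D by simp
  ultimately have "norm (Astar g) = \<alpha>" by linarith
  then show "let g = duality_map M q (A f) in g \<in> Lq_space M q' \<and> Lq_norm M q' g = 1 \<and> norm (Astar g) = \<alpha>"
    using D by (simp add: g_def Let_def)
qed

lemma AAstar:
  assumes g: "g \<in> Lq_space M q'" and g1: "Lq_norm M q' g = 1"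
  shows "norm (Astar g) * norm (Astar g) \<le> Lq_norm M q (A (Astar g))"
    and "Lq_norm M q (A (Astar g)) \<le> \<alpha> * norm (Astar g)"
proof -
  have "norm (Astar g) * norm (Astar g) = inner (Astar g) (Astar g)"
    by (metis power2_norm_eq_inner power2_eq_square)
  also have "\<dots> \<le> Lq_norm M q (A (Astar g))" using O5[OF g, of "Astar g"] g1 by simp
  finally show "norm (Astar g) * norm (Astar g) \<le> Lq_norm M q (A (Astar g))" .
  show "Lq_norm M q (A (Astar g)) \<le> \<alpha> * norm (Astar g)" by (rule O2)
qed

lemma part_b1:
  "\<forall>g. g \<in> Lq_space M q' \<and> Lq_norm M q' g = 1 \<and> norm (Astar g) = \<alpha> \<longrightarrow>
        (let f = (1 / norm (Astar g)) *\<^sub>R Astar g in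
          norm f = 1 \<and> Lq_norm M q (A f) = \<alpha>)"
proof (intro allI impI)
  fix g assume g: "g \<in> Lq_space M q' \<and> Lq_norm M q' g = 1 \<and> norm (Astar g) = \<alpha>"
  have n: "norm ((1 / norm (Astar g)) *\<^sub>R Astar g) = 1" using g alpha_pos by simp
  have e: "Lq_norm M q (A ((1 / norm (Astar g)) *\<^sub>R Astar g)) = (1/\<alpha>) * Lq_norm M q (A (Astar g))"
    using O1 g alpha_pos by simp
  have "Lq_norm M q (A (Astar g)) = \<alpha> * \<alpha>" using AAstar[of g] g by (metis order_antisym)
  then have "Lq_norm M q (A ((1 / norm (Astar g)) *\<^sub>R Astar g)) = \<alpha>" using e alpha_pos by simp
  then show "let f = (1 / norm (Astar g)) *\<^sub>R Astar g in norm f = 1 \<and> Lq_norm M q (A f) = \<alpha>"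
    using n by (simp add: Let_def)
qed

lemma inner_expand:
  fixes f a :: "'b::real_inner"
  assumes "norm f = 1"
  shows "inner (f - c *\<^sub>R a) (f - c *\<^sub>R a) = 1 - 2 * c * inner f a + c * c * (norm a * norm a)"
proof -
  have ff: "inner f f = 1" using assms by (metis power2_norm_eq_inner one_power2)
  have aa: "inner a a = norm a * norm a" by (metis power2_norm_eq_inner power2_eq_square)
  show ?thesis by (simp add: inner_diff_left inner_diff_right inner_commute ff aa algebra_simps)
qed

lemma part_a2:
  "\<forall>fs :: nat \<Rightarrow> 'h. (\<forall>n. norm (fs n) = 1) \<and> (\<lambda>n. Lq_norm M q (A (fs n))) \<longlonglongrightarrow> \<alpha> \<longrightarrow>
        (let gs = (\<lambda>n. duality_map M q (A (fs n))) in
          (\<forall>\<^sub>F n in sequentially. gs n \<in> Lq_space M q' \<and> Lq_norm M q' (gs n) = 1)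
          \<and> (\<lambda>n. norm (Astar (gs n))) \<longlonglongrightarrow> \<alpha>
          \<and> (\<forall>g. g \<in> Lq_space M q' \<and> (\<lambda>n. Lq_norm M q' (\<lambda>x. gs n x - g x)) \<longlonglongrightarrow> 0 \<longrightarrow>
                fs \<longlonglongrightarrow> (1 / norm (Astar g)) *\<^sub>R Astar g))"
proof (intro allI impI)
  fix fs :: "nat \<Rightarrow> 'h"
  assume H: "(\<forall>n. norm (fs n) = 1) \<and> (\<lambda>n. Lq_norm M q (A (fs n))) \<longlonglongrightarrow> \<alpha>"
  define gs where "gs = (\<lambda>n. duality_map M q (A (fs n)))"
  define L where "L = (\<lambda>n. Lq_norm M q (A (fs n)))"
  have Llim: "L \<longlonglongrightarrow> \<alpha>" using H by (simp add: L_def)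
  have n1: "\<And>n. norm (fs n) = 1" using H by simp
  have evpos: "eventually (\<lambda>n. 0 < L n) sequentially" using order_tendstoD(1)[OF Llim alpha_pos] .
  have evD: "eventually (\<lambda>n. gs n \<in> Lq_space M q' \<and> Lq_norm M q' (gs n) = 1 \<and> inner (fs n) (Astar (gs n)) = L n) sequentially"
    using evpos
  proof eventually_elim
    case (elim n)
    then have D: "gs n \<in> Lq_space M q' \<and> Lq_norm M q' (gs n) = 1 \<and> (\<integral>x. inner (A (fs n) x) (gs n x) \<partial>M) = L n"
      using DM[OF q q' A_into, of "fs n"] by (simp add: gs_def L_def)
    then show ?case using adjoint[of "gs n" "fs n"] by simp
  qed
  have P1: "\<forall>\<^sub>F n in sequentially. gs n \<in> Lq_space M q' \<and> Lq_norm M q' (gs n) = 1"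
    using evD by eventually_elim auto
  have evB: "eventually (\<lambda>n. L n \<le> norm (Astar (gs n)) \<and> norm (Astar (gs n)) \<le> \<alpha>) sequentially"
    using evD
  proof eventually_elim
    case (elim n)
    have "L n \<le> norm (Astar (gs n))" using elim norm_cauchy_schwarz[of "fs n" "Astar (gs n)"] n1[of n] by simp
    moreover have "norm (Astar (gs n)) \<le> \<alpha>" using O3[of "gs n"] elim by simp
    ultimately show ?case by simp
  qed
  have P2: "(\<lambda>n. norm (Astar (gs n))) \<longlonglongrightarrow> \<alpha>"
    by (rule tendsto_sandwich[of L _ _ "\<lambda>_. \<alpha>"]) (use evB Llim in \<open>auto elim: eventually_mono\<close>)
  have P3: "fs \<longlonglongrightarrow> (1 / norm (Astar g)) *\<^sub>R Astar g"
    if g: "g \<in> Lq_space M q'" and gl: "(\<lambda>n. Lq_norm M q' (\<lambda>x. gs n x - g x)) \<longlonglongrightarrow> 0" for g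
  proof -
    have "eventually (\<lambda>n. norm (Astar (gs n) - Astar g) \<le> \<alpha> * Lq_norm M q' (\<lambda>x. gs n x - g x)) sequentially"
      using evD by eventually_elim (use O4 g in auto)
    moreover have "(\<lambda>n. \<alpha> * Lq_norm M q' (\<lambda>x. gs n x - g x)) \<longlonglongrightarrow> 0"
      using tendsto_mult_right_zero[OF gl] by simp
    ultimately have "(\<lambda>n. Astar (gs n) - Astar g) \<longlonglongrightarrow> 0" by (rule Lim_null_comparison)
    then have alim: "(\<lambda>n. Astar (gs n)) \<longlonglongrightarrow> Astar g" by (rule LIM_zero_cancel)
    have nA: "norm (Astar g) = \<alpha>" using tendsto_norm[OF alim] P2 by (rule LIMSEQ_unique)
    define e where "e = (\<lambda>n. fs n - (1/\<alpha>) *\<^sub>R Astar (gs n))"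
    have ev: "eventually (\<lambda>n. inner (e n) (e n) = 1 - 2 * (1/\<alpha>) * L n + (1/\<alpha>) * (1/\<alpha>) * (norm (Astar (gs n)) * norm (Astar (gs n)))) sequentially"
      using evD by eventually_elim (simp add: e_def inner_expand[OF n1])
    have "(\<lambda>n. 1 - 2 * (1/\<alpha>) * L n + (1/\<alpha>) * (1/\<alpha>) * (norm (Astar (gs n)) * norm (Astar (gs n))))
        \<longlonglongrightarrow> 1 - 2 * (1/\<alpha>) * \<alpha> + (1/\<alpha>) * (1/\<alpha>) * (\<alpha> * \<alpha>)"
      by (intro tendsto_intros Llim P2)
    moreover have "1 - 2 * (1/\<alpha>) * \<alpha> + (1/\<alpha>) * (1/\<alpha>) * (\<alpha> * \<alpha>) = 0" using alpha_pos by simp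
    ultimately have "(\<lambda>n. 1 - 2 * (1/\<alpha>) * L n + (1/\<alpha>) * (1/\<alpha>) * (norm (Astar (gs n)) * norm (Astar (gs n)))) \<longlonglongrightarrow> 0"
      by simp
    then have "(\<lambda>n. inner (e n) (e n)) \<longlonglongrightarrow> 0"
      using tendsto_cong[OF ev] by blast
    then have "(\<lambda>n. sqrt (inner (e n) (e n))) \<longlonglongrightarrow> sqrt 0" by (rule tendsto_real_sqrt)
    then have "(\<lambda>n. norm (e n)) \<longlonglongrightarrow> 0" by (simp add: norm_eq_sqrt_inner)
    then have elim: "e \<longlonglongrightarrow> 0" by (simp add: tendsto_norm_zero_iff)
    have "(\<lambda>n. e n + (1/\<alpha>) *\<^sub>R Astar (gs n)) \<longlonglongrightarrow> 0 + (1/\<alpha>) *\<^sub>R Astar g"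
      by (intro tendsto_intros elim alim)
    moreover have "(\<lambda>n. e n + (1/\<alpha>) *\<^sub>R Astar (gs n)) = fs" by (simp add: e_def)
    ultimately show ?thesis using nA by simp
  qed
  show "let gs = (\<lambda>n. duality_map M q (A (fs n))) in
          (\<forall>\<^sub>F n in sequentially. gs n \<in> Lq_space M q' \<and> Lq_norm M q' (gs n) = 1)
          \<and> (\<lambda>n. norm (Astar (gs n))) \<longlonglongrightarrow> \<alpha>
          \<and> (\<forall>g. g \<in> Lq_space M q' \<and> (\<lambda>n. Lq_norm M q' (\<lambda>x. gs n x - g x)) \<longlonglongrightarrow> 0 \<longrightarrow>
                fs \<longlonglongrightarrow> (1 / norm (Astar g)) *\<^sub>R Astar g)"
    unfolding Let_def gs_def[symmetric] using P1 P2 P3 by blast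
qed

lemma conv_dual:
  assumes f: "Lq_norm M q (A f) = \<alpha>"
    and gs: "\<And>n. gs n \<in> Lq_space M q' \<and> Lq_norm M q' (gs n) = 1"
    and m: "(\<lambda>n. \<integral>x. inner (A f x) (gs n x) \<partial>M) \<longlonglongrightarrow> \<alpha>"
  shows "(\<lambda>n. Lq_norm M q' (\<lambda>x. gs n x - duality_map M q (A f) x)) \<longlonglongrightarrow> 0"
proof -
  define J where "J = duality_map M q (A f)"
  define h where "h = (\<lambda>x. (1/\<alpha>) *\<^sub>R A f x)"
  have ca: "\<alpha> powr (1-q) = 1 / (\<alpha> powr (q-2) * \<alpha>)"
  proof -
    have "\<alpha> powr (q-2) * \<alpha> = \<alpha> powr (q-2) * \<alpha> powr 1" using alpha_pos by simp
    also have "\<dots> = \<alpha> powr (q-1)" by (simp only: powr_add[symmetric]) simp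
    finally have "\<alpha> powr (q-2) * \<alpha> = \<alpha> powr (q-1)" .
    moreover have "\<alpha> powr (1-q) = inverse (\<alpha> powr (q-1))" using powr_minus[of \<alpha> "q-1"] by simp
    ultimately show ?thesis by (simp add: divide_inverse)
  qed
  have nh: "\<And>x. norm (h x) = norm (A f x) / \<alpha>" using alpha_pos by (simp add: h_def)
  have Jh: "\<And>x. J x = norm (h x) powr (q-2) *\<^sub>R h x"
  proof -
    fix x
    have "J x = (\<alpha> powr (1-q) * norm (A f x) powr (q-2)) *\<^sub>R A f x"
      by (simp add: J_def duality_map_def f)
    also have "\<alpha> powr (1-q) * norm (A f x) powr (q-2) = (norm (A f x) / \<alpha>) powr (q-2) * (1/\<alpha>)"
      unfolding ca using alpha_pos by (simp add: powr_divide field_simps)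
    finally show "J x = norm (h x) powr (q-2) *\<^sub>R h x" unfolding nh by (simp add: h_def)
  qed
  have JL: "J \<in> Lq_space M q'" using DM[OF q q' A_into, of f] f alpha_pos by (simp add: J_def)
  define I where "I = (\<lambda>n. \<integral>x. norm (gs n x - J x) powr q' \<partial>M)"
  have Ii: "\<And>n. integrable M (\<lambda>x. norm (gs n x - J x) powr q')"
    using Lq_diff[OF _ _ JL] gs qq(1) by (simp add: Lq_space_def)
  have I0: "\<And>n. 0 \<le> I n" by (simp add: I_def)
  have ai: "\<And>n. integrable M (\<lambda>x. norm (gs n x) powr q')" using gs by (simp add: Lq_space_def)
  have aI: "(\<integral>x. norm (gs n x) powr q' \<partial>M) = 1" for n
    using gs[of n] Lq_int_eq[of q' M "gs n"] qq(1) by simp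
  have bi0: "integrable M (\<lambda>x. norm (A f x) powr q)" using A_into by (simp add: Lq_space_def)
  have bi: "integrable M (\<lambda>x. norm (A f x) powr q / \<alpha> powr q)" using bi0 by simp
  have bI: "(\<integral>x. norm (A f x) powr q / \<alpha> powr q \<partial>M) = 1"
    using Lq_int_eq[of q M "A f"] q f alpha_pos by simp
  have ci: "\<And>n. integrable M (\<lambda>x. inner (A f x) (gs n x))"
    using holder_inner[OF q qq(1) qq(2) A_into] gs by blast
  have ILim: "I \<longlonglongrightarrow> 0"
  proof (rule order_tendstoI)
    fix a :: real assume "a < 0"
    then show "eventually (\<lambda>n. a < I n) sequentially" using I0 by (auto intro: always_eventually less_le_trans)
  next
    fix e :: real assume e: "0 < e"
    define \<epsilon> where "\<epsilon> = e/4"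
    have \<epsilon>0: "0 < \<epsilon>" using e by (simp add: \<epsilon>_def)
    obtain C where C0: "C \<ge> 0" and C: "\<And>(hh::'k) v. norm (v - norm hh powr (q-2) *\<^sub>R hh) powr q'
       \<le> \<epsilon> * (norm v powr q' + norm hh powr q) + C * (norm hh powr q / q + norm v powr q' / q' - inner hh v)"
      using PW[OF qq(1) qq(3) \<epsilon>0] by blast
    define mm where "mm = (\<lambda>n. \<integral>x. inner (A f x) (gs n x) \<partial>M)"
    have bound: "I n \<le> 2 * \<epsilon> + C * (1 - mm n / \<alpha>)" for n
    proof -
      define R where "R = (\<lambda>x. \<epsilon> * norm (gs n x) powr q' + \<epsilon> * (norm (A f x) powr q / \<alpha> powr q)
          + (C/q) * (norm (A f x) powr q / \<alpha> powr q) + (C/q') * norm (gs n x) powr q'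
          - (C/\<alpha>) * inner (A f x) (gs n x))"
      have pw: "norm (gs n x - J x) powr q' \<le> R x" for x
      proof -
        have "norm (h x) powr q = norm (A f x) powr q / \<alpha> powr q" by (simp add: nh powr_divide)
        moreover have "inner (h x) (gs n x) = (1/\<alpha>) * inner (A f x) (gs n x)" by (simp add: h_def)
        ultimately show ?thesis using C[of "gs n x" "h x"] unfolding Jh[symmetric] R_def
          by (simp add: algebra_simps)
      qed
      have Ri: "integrable M R" unfolding R_def
        by (intro Bochner_Integration.integrable_add Bochner_Integration.integrable_diff integrable_mult_right ai bi ci)
      have "I n \<le> integral\<^sup>L M R" unfolding I_def using Ii Ri pw by (intro integral_mono) auto
      also have "integral\<^sup>L M R = \<epsilon> * 1 + \<epsilon> * 1 + (C/q) * 1 + (C/q') * 1 - (C/\<alpha>) * mm n"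
      proof -
        have ha: "has_bochner_integral M (\<lambda>x. norm (gs n x) powr q') 1"
          using has_bochner_integral_integrable[OF ai[of n]] aI[of n] by simp
        have hb: "has_bochner_integral M (\<lambda>x. norm (A f x) powr q / \<alpha> powr q) 1"
          using has_bochner_integral_integrable[OF bi] by (simp only: bI)
        have hc: "has_bochner_integral M (\<lambda>x. inner (A f x) (gs n x)) (mm n)"
          using has_bochner_integral_integrable[OF ci[of n]] by (simp add: mm_def)
        have "has_bochner_integral M R (\<epsilon> * 1 + \<epsilon> * 1 + (C/q) * 1 + (C/q') * 1 - (C/\<alpha>) * mm n)"
          unfolding R_def
          by (intro has_bochner_integral_diff has_bochner_integral_add has_bochner_integral_mult_right ha hb hc)
        then show ?thesis by (rule has_bochner_integral_integral_eq)
      qed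
      also have "\<dots> = 2 * \<epsilon> + C * (1 - mm n / \<alpha>)"
      proof -
        have "C/q + C/q' = C * (1/q + 1/q')" by (simp add: distrib_left)
        then have "C/q + C/q' = C" using qq(2) by simp
        then show ?thesis by (simp add: algebra_simps)
      qed
      finally show ?thesis .
    qed
    have "(\<lambda>n. C * (1 - mm n / \<alpha>)) \<longlonglongrightarrow> C * (1 - \<alpha> / \<alpha>)"
      using m alpha_pos unfolding mm_def by (intro tendsto_intros) auto
    then have "(\<lambda>n. C * (1 - mm n / \<alpha>)) \<longlonglongrightarrow> 0" using alpha_pos by simp
    then have "eventually (\<lambda>n. C * (1 - mm n / \<alpha>) < \<epsilon>) sequentially" using \<epsilon>0 by (rule order_tendstoD)
    then show "eventually (\<lambda>n. I n < e) sequentially"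
    proof eventually_elim
      case (elim n)
      then show ?case using bound[of n] e unfolding \<epsilon>_def by linarith
    qed
  qed
  have "(\<lambda>n. I n powr (1/q')) \<longlonglongrightarrow> 0"
    by (rule tendsto_zero_powrI[OF ILim tendsto_const]) (use I0 qq(1) in auto)
  then show ?thesis by (simp add: I_def J_def Lq_norm_def)
qed

lemma part_b2:
  "\<forall>gs :: nat \<Rightarrow> 'a \<Rightarrow> 'k. (\<forall>n. gs n \<in> Lq_space M q' \<and> Lq_norm M q' (gs n) = 1)
          \<and> (\<lambda>n. norm (Astar (gs n))) \<longlonglongrightarrow> \<alpha> \<longrightarrow>
        (let fs = (\<lambda>n. (1 / norm (Astar (gs n))) *\<^sub>R Astar (gs n)) in
          (\<forall>\<^sub>F n in sequentially. norm (fs n) = 1)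
          \<and> (\<lambda>n. Lq_norm M q (A (fs n))) \<longlonglongrightarrow> \<alpha>
          \<and> (\<forall>f. fs \<longlonglongrightarrow> f \<longrightarrow>
                (\<lambda>n. Lq_norm M q' (\<lambda>x. gs n x - duality_map M q (A f) x)) \<longlonglongrightarrow> 0))"
proof (intro allI impI)
  fix gs :: "nat \<Rightarrow> 'a \<Rightarrow> 'k"
  assume H: "(\<forall>n. gs n \<in> Lq_space M q' \<and> Lq_norm M q' (gs n) = 1) \<and> (\<lambda>n. norm (Astar (gs n))) \<longlonglongrightarrow> \<alpha>"
  have gsL: "\<And>n. gs n \<in> Lq_space M q' \<and> Lq_norm M q' (gs n) = 1" using H by blast
  define d where "d = (\<lambda>n. Astar (gs n))"
  define fs where "fs = (\<lambda>n. (1 / norm (d n)) *\<^sub>R d n)"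
  have dlim: "(\<lambda>n. norm (d n)) \<longlonglongrightarrow> \<alpha>" using H by (simp add: d_def)
  have evpos: "eventually (\<lambda>n. 0 < norm (d n)) sequentially" using order_tendstoD(1)[OF dlim alpha_pos] .
  have P1: "\<forall>\<^sub>F n in sequentially. norm (fs n) = 1"
    using evpos by eventually_elim (simp add: fs_def)
  have evB: "eventually (\<lambda>n. norm (d n) \<le> Lq_norm M q (A (fs n)) \<and> Lq_norm M q (A (fs n)) \<le> \<alpha>) sequentially"
    using evpos
  proof eventually_elim
    case (elim n)
    have e: "Lq_norm M q (A (fs n)) = Lq_norm M q (A (d n)) / norm (d n)"
      using O1[of "1 / norm (d n)" "d n"] elim by (simp add: fs_def)
    have b1: "norm (d n) * norm (d n) \<le> Lq_norm M q (A (d n))" and b2: "Lq_norm M q (A (d n)) \<le> \<alpha> * norm (d n)"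
      using AAstar[of "gs n"] gsL[of n] by (auto simp: d_def)
    have "norm (d n) \<le> Lq_norm M q (A (d n)) / norm (d n)" using b1 elim by (simp add: field_simps)
    moreover have "Lq_norm M q (A (d n)) / norm (d n) \<le> \<alpha>" using b2 elim by (simp add: field_simps)
    ultimately show ?case using e by simp
  qed
  have P2: "(\<lambda>n. Lq_norm M q (A (fs n))) \<longlonglongrightarrow> \<alpha>"
    by (rule tendsto_sandwich[of "\<lambda>n. norm (d n)" _ _ "\<lambda>_. \<alpha>"]) (use evB dlim in \<open>auto elim: eventually_mono\<close>)
  have P3: "(\<lambda>n. Lq_norm M q' (\<lambda>x. gs n x - duality_map M q (A f) x)) \<longlonglongrightarrow> 0"
    if fl: "fs \<longlonglongrightarrow> f" for f
  proof -
    have "(\<lambda>n. norm (fs n)) \<longlonglongrightarrow> 1" using P1 by (rule tendsto_eventually)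
    then have nf: "norm f = 1" using tendsto_norm[OF fl] by (metis LIMSEQ_unique)
    define mm where "mm = (\<lambda>n. \<integral>x. inner (A f x) (gs n x) \<partial>M)"
    have mmd: "\<And>n. mm n = inner f (d n)" using adjoint gsL by (simp add: mm_def d_def)
    have ev1: "eventually (\<lambda>n. inner f (d n) = norm (d n) + inner (f - fs n) (d n)) sequentially"
      using evpos
    proof eventually_elim
      case (elim n)
      have "inner (fs n) (d n) = norm (d n)" using elim
        by (simp add: fs_def power2_norm_eq_inner[symmetric] power2_eq_square)
      then show ?case by (simp add: inner_diff_left)
    qed
    have "(\<lambda>n. fs n - f) \<longlonglongrightarrow> 0" using fl by (rule LIM_zero)
    then have "(\<lambda>n. norm (fs n - f)) \<longlonglongrightarrow> 0" by (simp add: tendsto_norm_zero_iff)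
    then have "(\<lambda>n. norm (fs n - f) * norm (d n)) \<longlonglongrightarrow> 0 * \<alpha>" using dlim by (rule tendsto_mult)
    then have lim0: "(\<lambda>n. norm (fs n - f) * norm (d n)) \<longlonglongrightarrow> 0" by simp
    have evn: "eventually (\<lambda>n. norm (inner (f - fs n) (d n)) \<le> norm (fs n - f) * norm (d n)) sequentially"
      by (intro always_eventually allI) (metis Cauchy_Schwarz_ineq2 norm_minus_commute real_norm_def)
    have "(\<lambda>n. inner (f - fs n) (d n)) \<longlonglongrightarrow> 0" by (rule Lim_null_comparison[OF evn lim0])
    then have "(\<lambda>n. norm (d n) + inner (f - fs n) (d n)) \<longlonglongrightarrow> \<alpha> + 0" using dlim by (intro tendsto_add)
    then have "(\<lambda>n. inner f (d n)) \<longlonglongrightarrow> \<alpha>" using tendsto_cong[OF ev1] by simp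
    moreover have "mm = (\<lambda>n. inner f (d n))" using mmd by (intro ext) simp
    ultimately have mlim: "mm \<longlonglongrightarrow> \<alpha>" by simp
    have "mm n \<le> Lq_norm M q (A f)" for n
    proof -
      have "\<bar>inner f (d n)\<bar> \<le> Lq_norm M q (A f) * Lq_norm M q' (gs n)"
        using O5[of "gs n" f] gsL[of n] by (simp add: d_def)
      then show ?thesis using gsL[of n] mmd[of n] by (simp add: abs_le_iff)
    qed
    then have "\<alpha> \<le> Lq_norm M q (A f)" using mlim by (intro LIMSEQ_le_const2) auto
    moreover have "Lq_norm M q (A f) \<le> \<alpha>" using O2[of f] nf by simp
    ultimately have Af: "Lq_norm M q (A f) = \<alpha>" by simp
    show ?thesis using conv_dual[OF Af gsL] mlim by (simp add: mm_def)
  qed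
  show "let fs = (\<lambda>n. (1 / norm (Astar (gs n))) *\<^sub>R Astar (gs n)) in
          (\<forall>\<^sub>F n in sequentially. norm (fs n) = 1)
          \<and> (\<lambda>n. Lq_norm M q (A (fs n))) \<longlonglongrightarrow> \<alpha>
          \<and> (\<forall>f. fs \<longlonglongrightarrow> f \<longrightarrow>
                (\<lambda>n. Lq_norm M q' (\<lambda>x. gs n x - duality_map M q (A f) x)) \<longlonglongrightarrow> 0)"
    unfolding Let_def using P1 P2 P3 by (simp add: fs_def d_def)
qed

end

theorem lemma3:
  fixes M :: "'a measure"
    and q q' :: real
    and A :: "'h::{real_inner,complete_space} \<Rightarrow> 'a \<Rightarrow> 'k::{real_inner,real_normed_field}"
    and Astar :: "('a \<Rightarrow> 'k) \<Rightarrow> 'h"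
    and \<alpha> :: real
  assumes q: "1 < q" and q': "q' = q / (q - 1)"
    and A_into: "\<And>f. A f \<in> Lq_space M q"
    and A_add: "\<And>f g. AE x in M. A (f + g) x = A f x + A g x"
    and A_scale: "\<And>c f. AE x in M. A (c *\<^sub>R f) x = c *\<^sub>R A f x"
    and A_bounded: "\<exists>C. \<forall>f. Lq_norm M q (A f) \<le> C * norm f"
    and adjoint: "\<And>g f. g \<in> Lq_space M q' \<Longrightarrow> inner f (Astar g) = (\<integral>x. inner (A f x) (g x) \<partial>M)"
    and alpha: "\<alpha> = op_norm_Lq M q A"
    and alpha_pos: "\<alpha> > 0"
  shows
    \<comment> \<open>(a1)\<close>
    "(\<forall>f. norm f = 1 \<and> Lq_norm M q (A f) = \<alpha> \<longrightarrow>
        (let g = duality_map M q (A f) in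
          g \<in> Lq_space M q' \<and> Lq_norm M q' g = 1 \<and> norm (Astar g) = \<alpha>))
    \<and>
    \<comment> \<open>(a2)\<close>
    (\<forall>fs :: nat \<Rightarrow> 'h. (\<forall>n. norm (fs n) = 1) \<and> (\<lambda>n. Lq_norm M q (A (fs n))) \<longlonglongrightarrow> \<alpha> \<longrightarrow>
        (let gs = (\<lambda>n. duality_map M q (A (fs n))) in
          (\<forall>\<^sub>F n in sequentially. gs n \<in> Lq_space M q' \<and> Lq_norm M q' (gs n) = 1)
          \<and> (\<lambda>n. norm (Astar (gs n))) \<longlonglongrightarrow> \<alpha>
          \<and> (\<forall>g. g \<in> Lq_space M q' \<and> (\<lambda>n. Lq_norm M q' (\<lambda>x. gs n x - g x)) \<longlonglongrightarrow> 0 \<longrightarrow>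
                fs \<longlonglongrightarrow> (1 / norm (Astar g)) *\<^sub>R Astar g)))
    \<and>
    \<comment> \<open>(b1)\<close>
    (\<forall>g. g \<in> Lq_space M q' \<and> Lq_norm M q' g = 1 \<and> norm (Astar g) = \<alpha> \<longrightarrow>
        (let f = (1 / norm (Astar g)) *\<^sub>R Astar g in
          norm f = 1 \<and> Lq_norm M q (A f) = \<alpha>))
    \<and>
    \<comment> \<open>(b2)\<close>
    (\<forall>gs :: nat \<Rightarrow> 'a \<Rightarrow> 'k. (\<forall>n. gs n \<in> Lq_space M q' \<and> Lq_norm M q' (gs n) = 1)
          \<and> (\<lambda>n. norm (Astar (gs n))) \<longlonglongrightarrow> \<alpha> \<longrightarrow>
        (let fs = (\<lambda>n. (1 / norm (Astar (gs n))) *\<^sub>R Astar (gs n)) in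
          (\<forall>\<^sub>F n in sequentially. norm (fs n) = 1)
          \<and> (\<lambda>n. Lq_norm M q (A (fs n))) \<longlonglongrightarrow> \<alpha>
          \<and> (\<forall>f. fs \<longlonglongrightarrow> f \<longrightarrow>
                (\<lambda>n. Lq_norm M q' (\<lambda>x. gs n x - duality_map M q (A f) x)) \<longlonglongrightarrow> 0)))"
proof -
  note ctx = q q' A_into A_scale A_bounded adjoint alpha alpha_pos
  show ?thesis
    using part_a1[OF ctx] part_a2[OF ctx] part_b1[OF ctx] part_b2[OF ctx] by (intro conjI)
qed

end
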